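(* Let $\{n_k\}_{k\ge1}\subset\mathbb{Z}^+$ and $\{c_k\}_{k\ge1}\subset\mathbb{R}^+$ satisfy $n_k\ge 2$ and $n_kc_k<1$ for all $k\ge1$, let $I\subset\mathbb{R}$ be a nonempty closed interval, and let $E\in\mathcal{M}(I,\{n_k\},\{c_k\})$ be a homogeneous Moran set. If $\sup_{k\ge1}n_k<+\infty$, then $$\dim_L E\le\liminf_{l\to+\infty}\ \inf_{k\ge1}\ \frac{\log (n_{k+1}\cdots n_{k+l})}{-\log (c_{k+1}\cdots c_{k+l})}.$$
   Context: Words: $\Omega_0=\{\emptyset\}$, $\Omega_k=\{\sigma_1\cdots\sigma_k:1\le\sigma_j\le n_j\}$, $\Omega=\bigcup_{k\ge0}\Omega_k$; for $\sigma\in\Omega_{k-1}$ and $1\le i\le n_k$, $\sigma*i\in\Omega_k$ denotes concatenation. A collection $\{I_\sigma:\sigma\in\Omega\}$ of closed intervals is a homogeneous Moran structure if $I_\emptyset=I$; for each $k\ge1$ and $\sigma\in\Omega_{k-1}$, the intervals $I_{\sigma*1},\dots,I_{\sigma*n_k}$ are contained in $I_\sigma$ and have pairwise disjoint interiors; and $|I_{\sigma*i}|/|I_\sigma|=c_k$ for all such $\sigma,i$ ($|\cdot|$ = diameter). The set $E=\bigcap_{k\ge1}\bigcup_{\sigma\in\Omega_k}I_\sigma$ is a homogeneous Moran set, and $\mathcal{M}(I,\{n_k\},\{c_k\})$ is the class of all such sets. For $F\subset\mathbb{R}$, $N_r(A)$ is the smallest number of balls of radius $r$ covering $A$, and the lower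 dimension is $\dim_L F=\sup\{s\ge0:\exists\, b,c>0\ \forall\, 0<r<R<b,\ \forall x\in F,\ N_r(B(x,R)\cap F)\ge c(R/r)^s\}$. *)

theory Defs
  imports "HOL-Analysis.Analysis"
begin

text \<open>Words of length k: lists sigma with 1 <= sigma!j <= n (j+1) for j < k
  (list position j corresponds to the paper's index j+1).\<close>
definition words :: "(nat \<Rightarrow> nat) \<Rightarrow> nat \<Rightarrow> nat list set" where
  "words n k = {\<sigma>. length \<sigma> = k \<and> (\<forall>j<k. 1 \<le> \<sigma> ! j \<and> \<sigma> ! j \<le> n (Suc j))}"

definition is_closed_interval :: "real set \<Rightarrow> bool" where
  "is_closed_interval S \<longleftrightarrow> (\<exists>a b. a \<le> b \<and> S = {a..b})"

text \<open>Homogeneous Moran structure; concatenation sigma*i is sigma @ [i].\<close>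
definition homog_moran_structure ::
  "real set \<Rightarrow> (nat \<Rightarrow> nat) \<Rightarrow> (nat \<Rightarrow> real) \<Rightarrow> (nat list \<Rightarrow> real set) \<Rightarrow> bool" where
  "homog_moran_structure I n c J \<longleftrightarrow>
     J [] = I \<and>
     (\<forall>k. \<forall>\<sigma>\<in>words n k. is_closed_interval (J \<sigma>)) \<and>
     (\<forall>m. \<forall>\<sigma>\<in>words n m.
        (\<forall>i\<in>{1..n (Suc m)}. J (\<sigma> @ [i]) \<subseteq> J \<sigma> \<and>
            diameter (J (\<sigma> @ [i])) / diameter (J \<sigma>) = c (Suc m)) \<and>
        (\<forall>i\<in>{1..n (Suc m)}. \<forall>j\<in>{1..n (Suc m)}. i \<noteq> j \<longrightarrow>
            interior (J (\<sigma> @ [i])) \<inter> interior (J (\<sigma> @ [j])) = {}))"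

definition moran_set :: "(nat \<Rightarrow> nat) \<Rightarrow> (nat list \<Rightarrow> real set) \<Rightarrow> real set" where
  "moran_set n J = (\<Inter>k\<in>{1..}. \<Union>\<sigma>\<in>words n k. J \<sigma>)"

definition moran_class :: "real set \<Rightarrow> (nat \<Rightarrow> nat) \<Rightarrow> (nat \<Rightarrow> real) \<Rightarrow> real set set" where
  "moran_class I n c = {E. \<exists>J. homog_moran_structure I n c J \<and> E = moran_set n J}"

definition covering_number :: "real \<Rightarrow> real set \<Rightarrow> nat" where
  "covering_number r A = (LEAST N. \<exists>C. finite C \<and> card C = N \<and> A \<subseteq> (\<Union>x\<in>C. ball x r))"

definition lower_dim :: "real set \<Rightarrow> ereal" where
  "lower_dim F = Sup (ereal ` {s. s \<ge> 0 \<and> (\<exists>b>0. \<exists>C>0. \<forall>r R. 0 < r \<longrightarrow> r < R \<longrightarrow> R < b \<longrightarrow>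
      (\<forall>x\<in>F. real (covering_number r (ball x R \<inter> F)) \<ge> C * (R / r) powr s))})"

end

theory Submission
  imports Defs
begin

lemma words_0: "words n 0 = {[]}" by (auto simp: words_def)

lemma words_Suc_iff: "\<tau> \<in> words n (Suc k) \<longleftrightarrow>
   (\<exists>\<rho> i. \<tau> = \<rho> @ [i] \<and> \<rho> \<in> words n k \<and> i \<in> {1..n (Suc k)})"
proof
  assume h: "\<tau> \<in> words n (Suc k)"
  then have l: "length \<tau> = Suc k" by (simp add: words_def)
  then have eq: "\<tau> = butlast \<tau> @ [last \<tau>]"
    by (metis append_butlast_last_id list.size(3) nat.distinct(1))
  have "butlast \<tau> \<in> words n k" using h l by (auto simp: words_def nth_butlast)
  moreover have "last \<tau> = \<tau> ! k" using l by (cases \<tau> rule: rev_cases) auto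
  moreover have "\<tau> ! k \<in> {1..n (Suc k)}" using h l
    by (auto simp: words_def)
  ultimately show "\<exists>\<rho> i. \<tau> = \<rho> @ [i] \<and> \<rho> \<in> words n k \<and> i \<in> {1..n (Suc k)}"
    using eq by (intro exI[of _ "butlast \<tau>"] exI[of _ "last \<tau>"]) simp
next
  assume "\<exists>\<rho> i. \<tau> = \<rho> @ [i] \<and> \<rho> \<in> words n k \<and> i \<in> {1..n (Suc k)}"
  then obtain \<rho> i where "\<tau> = \<rho> @ [i]" "\<rho> \<in> words n k" "i \<in> {1..n (Suc k)}" by blast
  then show "\<tau> \<in> words n (Suc k)"
    by (auto simp: words_def nth_append less_Suc_eq)
qed

lemma words_Suc: "words n (Suc k) = (\<lambda>(\<rho>,i). \<rho> @ [i]) ` (words n k \<times> {1..n (Suc k)})"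
proof
  show "words n (Suc k) \<subseteq> (\<lambda>(\<rho>,i). \<rho> @ [i]) ` (words n k \<times> {1..n (Suc k)})"
  proof
    fix \<tau> assume "\<tau> \<in> words n (Suc k)"
    then obtain \<rho> i where "\<tau> = \<rho> @ [i]" "\<rho> \<in> words n k" "i \<in> {1..n (Suc k)}"
      by (auto simp: words_Suc_iff)
    then show "\<tau> \<in> (\<lambda>(\<rho>,i). \<rho> @ [i]) ` (words n k \<times> {1..n (Suc k)})"
      by (intro rev_image_eqI[of "(\<rho>,i)"]) auto
  qed
  show "(\<lambda>(\<rho>,i). \<rho> @ [i]) ` (words n k \<times> {1..n (Suc k)}) \<subseteq> words n (Suc k)"
    using words_Suc_iff by fastforce
qed

lemma finite_words: "finite (words n k)"
  by (induction k) (auto simp: words_0 words_Suc)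

lemma words_take: "\<tau> \<in> words n (k + m) \<Longrightarrow> take k \<tau> \<in> words n k"
  by (auto simp: words_def)

lemma words_length: "\<tau> \<in> words n k \<Longrightarrow> length \<tau> = k"
  by (auto simp: words_def)

lemma replicate_words: "(\<And>j. j \<ge> 1 \<Longrightarrow> n j \<ge> 1) \<Longrightarrow> replicate k 1 \<in> words n k"
  by (auto simp: words_def)

lemma card_ext_le:
  assumes "\<sigma> \<in> words n k"
  shows "card {\<tau> \<in> words n (k + m). take k \<tau> = \<sigma>} \<le> (\<Prod>j\<in>{k+1..k+m}. n j)"
proof (induction m)
  case 0
  have "{\<tau> \<in> words n (k + 0). take k \<tau> = \<sigma>} \<subseteq> {\<sigma>}"
    by (auto simp: words_def)
  then have "card {\<tau> \<in> words n (k + 0). take k \<tau> = \<sigma>} \<le> 1"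
    using card_mono[of "{\<sigma>}"] by fastforce
  then show ?case by simp
next
  case (Suc m)
  let ?A = "{\<tau> \<in> words n (k + m). take k \<tau> = \<sigma>}"
  have "{\<tau> \<in> words n (k + Suc m). take k \<tau> = \<sigma>} \<subseteq> (\<lambda>(\<rho>,i). \<rho> @ [i]) ` (?A \<times> {1..n (Suc (k+m))})"
  proof
    fix \<tau> assume "\<tau> \<in> {\<tau> \<in> words n (k + Suc m). take k \<tau> = \<sigma>}"
    then obtain \<rho> i where h: "\<tau> = \<rho> @ [i]" "\<rho> \<in> words n (k+m)" "i \<in> {1..n (Suc (k+m))}" "take k \<tau> = \<sigma>"
      by (auto simp: words_Suc_iff)
    then have "take k \<rho> = \<sigma>" using words_length[OF h(2)] by simp
    then show "\<tau> \<in> (\<lambda>(\<rho>,i). \<rho> @ [i]) ` (?A \<times> {1..n (Suc (k+m))})" using h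
      by (intro rev_image_eqI[of "(\<rho>,i)"]) auto
  qed
  then have "card {\<tau> \<in> words n (k + Suc m). take k \<tau> = \<sigma>} \<le> card ((\<lambda>(\<rho>,i). \<rho> @ [i]) ` (?A \<times> {1..n (Suc (k+m))}))"
    by (intro card_mono finite_imageI finite_cartesian_product) (auto intro: finite_subset[OF _ finite_words])
  also have "\<dots> \<le> card (?A \<times> {1..n (Suc (k+m))})" by (rule card_image_le) (auto intro: finite_subset[OF _ finite_words])
  also have "\<dots> = card ?A * n (Suc (k+m))" by (simp add: card_cartesian_product)
  also have "\<dots> \<le> (\<Prod>j\<in>{k+1..k+m}. n j) * n (Suc (k+m))" using Suc by simp
  also have "\<dots> = (\<Prod>j\<in>{k+1..k+Suc m}. n j)"
    by (simp add: prod.nat_ivl_Suc' mult.commute)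
  finally show ?case .
qed

locale moran =
  fixes n :: "nat \<Rightarrow> nat" and c :: "nat \<Rightarrow> real" and I :: "real set" and J :: "nat list \<Rightarrow> real set"
  assumes hms: "homog_moran_structure I n c J"
    and n_ge: "\<And>k. k \<ge> 1 \<Longrightarrow> n k \<ge> 2"
    and c_pos: "\<And>k. k \<ge> 1 \<Longrightarrow> c k > 0"
    and nc_lt: "\<And>k. k \<ge> 1 \<Longrightarrow> real (n k) * c k < 1"
begin

definition D where "D k = diameter I * (\<Prod>j\<in>{1..k}. c j)"

lemma J_nil: "J [] = I" using hms by (simp add: homog_moran_structure_def)

lemma J_int: "\<sigma> \<in> words n k \<Longrightarrow> \<exists>a b. a \<le> b \<and> J \<sigma> = {a..b}"
  using hms by (auto simp: homog_moran_structure_def is_closed_interval_def)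

lemma child: "\<sigma> \<in> words n m \<Longrightarrow> i \<in> {1..n (Suc m)} \<Longrightarrow>
   J (\<sigma> @ [i]) \<subseteq> J \<sigma> \<and> diameter (J (\<sigma> @ [i])) / diameter (J \<sigma>) = c (Suc m)"
  using hms by (auto simp: homog_moran_structure_def)

lemma sib: "\<sigma> \<in> words n m \<Longrightarrow> i \<in> {1..n (Suc m)} \<Longrightarrow> j \<in> {1..n (Suc m)} \<Longrightarrow> i \<noteq> j \<Longrightarrow>
   interior (J (\<sigma> @ [i])) \<inter> interior (J (\<sigma> @ [j])) = {}"
  using hms unfolding homog_moran_structure_def by blast

lemma c_half: "k \<ge> 1 \<Longrightarrow> c k < 1/2"
proof -
  assume k: "k \<ge> 1"
  have "2 * c k \<le> real (n k) * c k" using n_ge[OF k] c_pos[OF k]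
    by (intro mult_right_mono) auto
  then show ?thesis using nc_lt[OF k] by simp
qed

lemma diamI: "diameter I > 0"
proof -
  have w: "[] \<in> words n 0" by (simp add: words_0)
  have i: "(1::nat) \<in> {1..n (Suc 0)}" using n_ge[of 1] by simp
  have "diameter (J ([] @ [1])) / diameter (J []) = c 1" using child[OF w i] by simp
  then have "diameter I \<noteq> 0" using c_pos[of 1] J_nil by auto
  moreover obtain a b where "a \<le> b" "J [] = {a..b}" using J_int[OF w] by blast
  ultimately show ?thesis using J_nil by auto
qed

lemma D_pos: "D k > 0"
  unfolding D_def using diamI by (intro mult_pos_pos prod_pos c_pos) auto

lemma D_Suc: "D (Suc k) = D k * c (Suc k)"
  unfolding D_def by (simp add: prod.cl_ivl_Suc)

lemma diam_words: "\<sigma> \<in> words n k \<Longrightarrow> diameter (J \<sigma>) = D k"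
proof (induction k arbitrary: \<sigma>)
  case 0
  then show ?case by (simp add: words_0 J_nil D_def)
next
  case (Suc k)
  then obtain \<rho> i where h: "\<sigma> = \<rho> @ [i]" "\<rho> \<in> words n k" "i \<in> {1..n (Suc k)}"
    by (auto simp: words_Suc_iff)
  have "diameter (J \<sigma>) / D k = c (Suc k)" using child[OF h(2,3)] Suc.IH[OF h(2)] h(1) by simp
  then show ?case using D_pos[of k] D_Suc by (simp add: field_simps)
qed

definition lft where "lft \<sigma> = Inf (J \<sigma>)"

lemma J_form: "\<sigma> \<in> words n k \<Longrightarrow> J \<sigma> = {lft \<sigma> .. lft \<sigma> + D k}"
proof -
  assume w: "\<sigma> \<in> words n k"
  obtain a b where ab: "a \<le> b" "J \<sigma> = {a..b}" using J_int[OF w] by blast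
  have "diameter (J \<sigma>) = b - a" using ab by simp
  then have "b = a + D k" using diam_words[OF w] by simp
  moreover have "lft \<sigma> = a" using ab by (simp add: lft_def)
  ultimately show ?thesis using ab by simp
qed

lemma nest: "\<tau> \<in> words n (k + m) \<Longrightarrow> J \<tau> \<subseteq> J (take k \<tau>)"
proof (induction m arbitrary: \<tau>)
  case 0
  then show ?case by (simp add: words_length)
next
  case (Suc m)
  then obtain \<rho> i where h: "\<tau> = \<rho> @ [i]" "\<rho> \<in> words n (k+m)" "i \<in> {1..n (Suc (k+m))}"
    by (auto simp: words_Suc_iff)
  have "J \<tau> \<subseteq> J \<rho>" using child[OF h(2,3)] h(1) by simp
  also have "\<dots> \<subseteq> J (take k \<rho>)" by (rule Suc.IH[OF h(2)])
  also have "take k \<rho> = take k \<tau>" using h(1) words_length[OF h(2)] by simp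
  finally show ?case .
qed

lemma disj: "\<sigma> \<in> words n k \<Longrightarrow> \<tau> \<in> words n k \<Longrightarrow> \<sigma> \<noteq> \<tau> \<Longrightarrow>
    interior (J \<sigma>) \<inter> interior (J \<tau>) = {}"
proof (induction k arbitrary: \<sigma> \<tau>)
  case 0
  then show ?case by (simp add: words_0)
next
  case (Suc k)
  obtain \<rho> i where h: "\<sigma> = \<rho> @ [i]" "\<rho> \<in> words n k" "i \<in> {1..n (Suc k)}"
    using Suc.prems by (auto simp: words_Suc_iff)
  obtain \<rho>' j where h': "\<tau> = \<rho>' @ [j]" "\<rho>' \<in> words n k" "j \<in> {1..n (Suc k)}"
    using Suc.prems by (auto simp: words_Suc_iff)
  show ?case
  proof (cases "\<rho> = \<rho>'")
    case True
    have ij: "i \<noteq> j" using Suc.prems h h' True by auto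
    show ?thesis using sib[OF h(2,3) _ ij] h h' True by simp
  next
    case False
    have "interior (J \<sigma>) \<subseteq> interior (J \<rho>)" using child[OF h(2,3)] h(1) by (simp add: interior_mono)
    moreover have "interior (J \<tau>) \<subseteq> interior (J \<rho>')" using child[OF h'(2,3)] h'(1) by (simp add: interior_mono)
    ultimately show ?thesis using Suc.IH[OF h(2) h'(2) False] by blast
  qed
qed

lemma sep: "\<sigma> \<in> words n k \<Longrightarrow> \<tau> \<in> words n k \<Longrightarrow> \<sigma> \<noteq> \<tau> \<Longrightarrow> \<bar>lft \<sigma> - lft \<tau>\<bar> \<ge> D k"
proof (rule ccontr)
  assume w: "\<sigma> \<in> words n k" "\<tau> \<in> words n k" "\<sigma> \<noteq> \<tau>" and nl: "\<not> \<bar>lft \<sigma> - lft \<tau>\<bar> \<ge> D k"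
  define a where "a = lft \<sigma>"
  define a' where "a' = lft \<tau>"
  define p where "p = (max a a' + min a a' + D k) / 2"
  have "interior (J \<sigma>) = {a<..<a + D k}" using J_form[OF w(1)] a_def by simp
  moreover have "interior (J \<tau>) = {a'<..<a' + D k}" using J_form[OF w(2)] a'_def by simp
  moreover have "p \<in> {a<..<a + D k} \<inter> {a'<..<a' + D k}"
    using nl D_pos[of k] unfolding p_def a_def[symmetric] a'_def[symmetric] by (auto simp: abs_if max_def min_def split: if_splits)
  ultimately show False using disj[OF w] by auto
qed


lemma count: "card {\<sigma> \<in> words n k. J \<sigma> \<inter> ball x (D k) \<noteq> {}} \<le> 4"
proof -
  define R where "R = D k"
  have R: "R > 0" using D_pos R_def by simp
  define W where "W = {\<sigma> \<in> words n k. J \<sigma> \<inter> ball x R \<noteq> {}}"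
  define f where "f \<sigma> = \<lfloor>lft \<sigma> / R\<rfloor>" for \<sigma>
  define t where "t = \<lfloor>x / R\<rfloor>"
  have inj: "inj_on f W"
  proof (rule inj_onI, rule ccontr)
    fix \<sigma> \<tau> assume a: "\<sigma> \<in> W" "\<tau> \<in> W" "f \<sigma> = f \<tau>" "\<sigma> \<noteq> \<tau>"
    have s: "\<bar>lft \<sigma> - lft \<tau>\<bar> \<ge> R" using sep[of \<sigma> k \<tau>] a W_def R_def by auto
    have "\<bar>lft \<sigma> / R - lft \<tau> / R\<bar> \<ge> 1"
    proof -
      have "\<bar>lft \<sigma> / R - lft \<tau> / R\<bar> = \<bar>lft \<sigma> - lft \<tau>\<bar> / R" using R
        by (simp add: diff_divide_distrib[symmetric] abs_divide)
      then show ?thesis using s R by simp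
    qed
    moreover have "of_int (f \<sigma>) \<le> lft \<sigma> / R" "lft \<sigma> / R < of_int (f \<sigma>) + 1"
      "of_int (f \<tau>) \<le> lft \<tau> / R" "lft \<tau> / R < of_int (f \<tau>) + 1"
      unfolding f_def by linarith+
    ultimately show False using a(3) by linarith
  qed
  have img: "f ` W \<subseteq> {t - 2 .. t + 1}"
  proof
    fix z assume "z \<in> f ` W"
    then obtain \<sigma> where s: "\<sigma> \<in> W" "z = f \<sigma>" by blast
    then have w: "\<sigma> \<in> words n k" by (simp add: W_def)
    obtain y where y: "y \<in> J \<sigma>" "dist x y < R" using s W_def by auto
    have "lft \<sigma> \<le> y" "y \<le> lft \<sigma> + R" using y(1) J_form[OF w] R_def by auto
    moreover have "x - R < y" "y < x + R" using y(2) by (auto simp: dist_real_def)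
    ultimately have a1: "x - 2 * R < lft \<sigma>" "lft \<sigma> < x + R" by linarith+
    have "x / R - 2 = (x - 2 * R) / R" "x / R + 1 = (x + R) / R" using R by (simp_all add: field_simps)
    then have "x / R - 2 < lft \<sigma> / R" "lft \<sigma> / R < x / R + 1" using R a1
      by (simp_all add: divide_strict_right_mono)
    moreover have "of_int t \<le> x / R" "x / R < of_int t + 1" unfolding t_def by linarith+
    ultimately have "t - 2 \<le> f \<sigma>" "f \<sigma> \<le> t + 1" unfolding f_def
      by (simp_all add: le_floor_iff floor_le_iff)
    then show "z \<in> {t - 2 .. t + 1}" using s by simp
  qed
  have "card W = card (f ` W)" using inj by (simp add: card_image)
  also have "\<dots> \<le> card {t - 2 .. t + 1}" by (rule card_mono) (use img in auto)
  also have "\<dots> = 4" by simp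
  finally show ?thesis unfolding W_def R_def .
qed

lemma E_cover: "y \<in> moran_set n J \<Longrightarrow> m \<ge> 1 \<Longrightarrow> \<exists>\<tau>\<in>words n m. y \<in> J \<tau>"
  unfolding moran_set_def by auto

lemma cover:
  assumes l: "l \<ge> 1"
  shows "covering_number (D (k + l)) (ball x (D k) \<inter> moran_set n J) \<le> 4 * (\<Prod>j\<in>{k+1..k+l}. n j)"
proof -
  define r where "r = D (k + l)"
  have r: "r > 0" using D_pos r_def by simp
  define W where "W = {\<sigma> \<in> words n k. J \<sigma> \<inter> ball x (D k) \<noteq> {}}"
  define T where "T = {\<tau> \<in> words n (k + l). take k \<tau> \<in> W}"
  have TU: "T = (\<Union>\<sigma>\<in>W. {\<tau> \<in> words n (k + l). take k \<tau> = \<sigma>})" unfolding T_def by auto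
  have fW: "finite W" unfolding W_def using finite_words by auto
  have fT: "finite T" unfolding T_def using finite_words by auto
  have "card T \<le> (\<Sum>\<sigma>\<in>W. card {\<tau> \<in> words n (k + l). take k \<tau> = \<sigma>})"
    unfolding TU by (rule card_UN_le[OF fW])
  also have "\<dots> \<le> (\<Sum>\<sigma>\<in>W. (\<Prod>j\<in>{k+1..k+l}. n j))"
    by (rule sum_mono) (rule card_ext_le, simp add: W_def)
  also have "\<dots> = card W * (\<Prod>j\<in>{k+1..k+l}. n j)" by simp
  also have "\<dots> \<le> 4 * (\<Prod>j\<in>{k+1..k+l}. n j)" using count[of k x] unfolding W_def
    by (intro mult_right_mono) auto
  finally have cT: "card T \<le> 4 * (\<Prod>j\<in>{k+1..k+l}. n j)" .
  define C where "C = (\<lambda>\<tau>. lft \<tau> + r / 2) ` T"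
  have fC: "finite C" using fT C_def by simp
  have cC: "card C \<le> card T" unfolding C_def by (rule card_image_le[OF fT])
  have sub: "ball x (D k) \<inter> moran_set n J \<subseteq> (\<Union>z\<in>C. ball z r)"
  proof
    fix y assume y: "y \<in> ball x (D k) \<inter> moran_set n J"
    obtain \<tau> where t: "\<tau> \<in> words n (k + l)" "y \<in> J \<tau>" using E_cover[of y "k + l"] y l by auto
    have "J \<tau> \<subseteq> J (take k \<tau>)" by (rule nest[OF t(1)])
    then have "take k \<tau> \<in> W" using t y words_take[OF t(1)] unfolding W_def by auto
    then have tT: "\<tau> \<in> T" using t(1) T_def by simp
    have "lft \<tau> \<le> y" "y \<le> lft \<tau> + r" using t(2) J_form[OF t(1)] r_def by auto
    then have "y \<in> ball (lft \<tau> + r / 2) r" using r by (auto simp: dist_real_def)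
    then show "y \<in> (\<Union>z\<in>C. ball z r)" using tT C_def by auto
  qed
  have "covering_number r (ball x (D k) \<inter> moran_set n J) \<le> card C"
    unfolding covering_number_def by (rule Least_le) (use fC sub in blast)
  then show ?thesis unfolding r_def[symmetric] using cC cT by linarith
qed

lemma nonempty: "moran_set n J \<noteq> {}"
proof -
  define F where "F k = J (replicate k 1)" for k
  have rw: "replicate k 1 \<in> words n k" for k by (rule replicate_words) (use n_ge in force)
  have cF: "compact (F k)" "F k \<noteq> {}" for k
    using J_int[OF rw[of k]] unfolding F_def by auto
  have mono1: "F (Suc k) \<subseteq> F k" for k
  proof -
    have "replicate (Suc k) (1::nat) = replicate k 1 @ [1]" by (simp add: replicate_append_same)
    moreover have "(1::nat) \<in> {1..n (Suc k)}" using n_ge[of "Suc k"] by simp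
    ultimately show ?thesis using child[OF rw[of k]] unfolding F_def by simp
  qed
  have mono: "m \<le> k \<Longrightarrow> F k \<subseteq> F m" for m k
    by (induction k rule: dec_induct) (use mono1 in auto)
  obtain p where p: "p \<in> \<Inter>(range F)" using compact_nest[of F, OF cF mono] by blast
  have "p \<in> moran_set n J" unfolding moran_set_def using p rw F_def by blast
  then show ?thesis by blast
qed

lemma D_split: "D (k + l) = D k * (\<Prod>j\<in>{k+1..k+l}. c j)"
  unfolding D_def using prod.ub_add_nat[of 1 k c l] by simp

lemma D_le: "D k \<le> diameter I * (1/2) ^ k"
proof (induction k)
  case 0 then show ?case by (simp add: D_def)
next
  case (Suc k)
  have "D (Suc k) = D k * c (Suc k)" by (rule D_Suc)
  also have "\<dots> \<le> D k * (1/2)" using c_half[of "Suc k"] D_pos[of k] by (intro mult_left_mono) auto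
  also have "\<dots> \<le> diameter I * (1/2) ^ k * (1/2)" using Suc by simp
  finally show ?case by simp
qed


lemma D_Suc_less: "D (Suc k) < D k"
  using D_Suc c_half[of "Suc k"] D_pos[of k] by (simp add: mult_less_cancel_left1)

lemma D_mono: "k \<le> k' \<Longrightarrow> D k' \<le> D k"
proof (induction k' rule: dec_induct)
  case base then show ?case by simp
next
  case (step m) then show ?case using D_Suc_less[of m] by linarith
qed

lemma a_nonneg: "j \<ge> 1 \<Longrightarrow> ln (real (n j)) \<ge> 0"
  using n_ge[of j] by simp

lemma b_gt: "j \<ge> 1 \<Longrightarrow> - ln (c j) > ln 2"
proof -
  assume j: "j \<ge> 1"
  have "ln (c j) < ln (1/2)" using c_half[OF j] c_pos[OF j] by simp
  then show ?thesis by (simp add: ln_div)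
qed

lemma ln_N: "ln (real (\<Prod>j\<in>{k+1..k+l}. n j)) = (\<Sum>j\<in>{k+1..k+l}. ln (real (n j)))"
proof -
  have "ln (real (\<Prod>j\<in>{k+1..k+l}. n j)) = ln (\<Prod>j\<in>{k+1..k+l}. real (n j))" by simp
  also have "\<dots> = (\<Sum>j\<in>{k+1..k+l}. ln (real (n j)))"
  proof (rule ln_prod)
    fix i assume "i \<in> {k+1..k+l}"
    then have "i \<ge> 1" by simp
    then show "real (n i) \<noteq> 0" using n_ge[of i] by simp
  qed simp
  finally show ?thesis .
qed

lemma ln_P: "- ln (\<Prod>j\<in>{k+1..k+l}. c j) = (\<Sum>j\<in>{k+1..k+l}. - ln (c j))"
proof -
  have "ln (\<Prod>j\<in>{k+1..k+l}. c j) = (\<Sum>j\<in>{k+1..k+l}. ln (c j))"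
  proof (rule ln_prod)
    fix i assume "i \<in> {k+1..k+l}"
    then have "i \<ge> 1" by simp
    then show "c i \<noteq> 0" using c_pos[of i] by simp
  qed simp
  then show ?thesis by (simp add: sum_negf)
qed

lemma key:
  assumes s0: "s \<ge> 0" and b: "b > 0" and C: "C > 0"
    and H: "\<forall>r R. 0 < r \<longrightarrow> r < R \<longrightarrow> R < b \<longrightarrow>
      (\<forall>x\<in>moran_set n J. real (covering_number r (ball x R \<inter> moran_set n J)) \<ge> C * (R / r) powr s)"
  shows "ereal s \<le> liminf (\<lambda>l. INF k\<in>{1..}. ereal (ln (real (\<Prod>j\<in>{k+1..k+l}. n j)) /
                                     - ln (\<Prod>j\<in>{k+1..k+l}. c j)))"
proof -
  define a where "a j = ln (real (n j))" for j
  define bb where "bb j = - ln (c j)" for j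
  obtain x where x: "x \<in> moran_set n J" using nonempty by blast
  obtain k0 where k0: "(1/2) ^ k0 < b / diameter I"
    using real_arch_pow_inv[of "b / diameter I" "1/2"] b diamI by auto
  define K0 where "K0 = Suc k0"
  have K0: "K0 \<ge> 1" unfolding K0_def by simp
  have DK0: "D K0 < b"
  proof -
    have "D K0 \<le> diameter I * (1/2) ^ K0" by (rule D_le)
    also have "\<dots> \<le> diameter I * (1/2) ^ k0" unfolding K0_def using diamI by simp
    also have "\<dots> < b" using k0 diamI by (simp add: field_simps)
    finally show ?thesis .
  qed
  define Q where "Q = ln 4 - ln C"
  have key1: "s * (\<Sum>j\<in>{k+1..k+m}. bb j) \<le> (\<Sum>j\<in>{k+1..k+m}. a j) + Q"
    if km: "k \<ge> K0" "m \<ge> 1" for k m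
  proof -
    define P where "P = (\<Prod>j\<in>{k+1..k+m}. c j)"
    have P: "P > 0" unfolding P_def
    proof (rule prod_pos)
      fix i assume "i \<in> {k+1..k+m}"
      then have "i \<ge> 1" by simp
      then show "c i > 0" using c_pos[of i] by simp
    qed
    have Dkm: "D (k + m) = D k * P" unfolding P_def by (rule D_split)
    have r0: "0 < D (k + m)" by (rule D_pos)
    have rR: "D (k + m) < D k" using D_mono[of "Suc k" "k + m"] D_Suc_less[of k] km by simp
    have Rb: "D k < b" using D_mono[OF km(1)] DK0 by simp
    have "C * (D k / D (k + m)) powr s \<le> real (covering_number (D (k + m)) (ball x (D k) \<inter> moran_set n J))"
      using H r0 rR Rb x by blast
    also have "\<dots> \<le> real (4 * (\<Prod>j\<in>{k+1..k+m}. n j))" using cover[OF km(2), of k x] by linarith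
    finally have ineq: "C * (1 / P) powr s \<le> 4 * real (\<Prod>j\<in>{k+1..k+m}. n j)"
      using Dkm D_pos[of k] by simp
    have "(\<Prod>j\<in>{k+1..k+m}. n j) > 0"
    proof (rule prod_pos)
      fix i assume "i \<in> {k+1..k+m}"
      then have "i \<ge> 1" by simp
      then show "n i > 0" using n_ge[of i] by simp
    qed
    then have Npos: "real (\<Prod>j\<in>{k+1..k+m}. n j) > 0" by (simp only: of_nat_0_less_iff)
    define N where "N = real (\<Prod>j\<in>{k+1..k+m}. n j)"
    have N: "N > 0" using Npos N_def by simp
    have "ln (C * (1 / P) powr s) \<le> ln (4 * N)"
      using ineq C P N unfolding N_def[symmetric] by (subst ln_le_cancel_iff) auto
    moreover have "ln (C * (1 / P) powr s) = ln C + s * (- ln P)"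
      using C P by (simp add: ln_mult ln_div)
    moreover have "ln (4 * N) = ln 4 + ln N" using N by (simp add: ln_mult)
    ultimately have "ln C + s * (- ln P) \<le> ln 4 + ln (real (\<Prod>j\<in>{k+1..k+m}. n j))"
      unfolding N_def by linarith
    then show ?thesis unfolding P_def ln_P ln_N a_def bb_def Q_def by (simp add: algebra_simps)
  qed
  define A where "A = (\<Sum>j\<in>{2..K0}. bb j)"
  define M where "M = s * A + \<bar>Q\<bar>"
  have "bb j \<ge> 0" if "j \<in> {2..K0}" for j
  proof -
    have "j \<ge> 1" using that by simp
    then show ?thesis using b_gt[of j] ln_ge_zero[of 2] unfolding bb_def by linarith
  qed
  then have M0: "M \<ge> 0" unfolding M_def A_def using s0
    by (intro add_nonneg_nonneg mult_nonneg_nonneg sum_nonneg) auto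
  have bound: "(\<Sum>j\<in>{k+1..k+l}. a j) / (\<Sum>j\<in>{k+1..k+l}. bb j) \<ge> s - M / (real l * ln 2)"
    if kl: "k \<ge> 1" "l \<ge> K0" for k l
  proof -
    define k1 where "k1 = max k K0"
    define m where "m = k + l - k1"
    have m1: "m \<ge> 1" "k1 + m = k + l" unfolding m_def k1_def using kl K0 by auto
    have splitb: "(\<Sum>j\<in>{k+1..k+l}. bb j) = (\<Sum>j\<in>{k+1..k1}. bb j) + (\<Sum>j\<in>{k1+1..k1+m}. bb j)"
      using sum.ub_add_nat[of "k+1" k1 bb m] m1 unfolding k1_def by simp
    have splita: "(\<Sum>j\<in>{k+1..k+l}. a j) = (\<Sum>j\<in>{k+1..k1}. a j) + (\<Sum>j\<in>{k1+1..k1+m}. a j)"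
      using sum.ub_add_nat[of "k+1" k1 a m] m1 unfolding k1_def by simp
    have a0: "(\<Sum>j\<in>{k+1..k1}. a j) \<ge> 0" unfolding a_def using a_nonneg kl by (intro sum_nonneg) auto
    have bA: "(\<Sum>j\<in>{k+1..k1}. bb j) \<le> A" unfolding A_def
    proof (rule sum_mono2)
      show "{k+1..k1} \<subseteq> {2..K0}" using kl unfolding k1_def by auto
      show "0 \<le> bb j" if "j \<in> {2..K0} - {k+1..k1}" for j
      proof -
        have "j \<ge> 1" using that by auto
        then show ?thesis using b_gt[of j] ln_ge_zero[of "2::real"] unfolding bb_def by linarith
      qed
    qed simp
    have k1: "k1 \<ge> K0" unfolding k1_def by simp
    have t: "s * (\<Sum>j\<in>{k1+1..k1+m}. bb j) \<le> (\<Sum>j\<in>{k1+1..k1+m}. a j) + Q" by (rule key1[OF k1 m1(1)])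
    define B where "B = (\<Sum>j\<in>{k+1..k+l}. bb j)"
    define Aa where "Aa = (\<Sum>j\<in>{k+1..k+l}. a j)"
    have sB: "s * B \<le> Aa + M"
    proof -
      have "s * B = s * (\<Sum>j\<in>{k+1..k1}. bb j) + s * (\<Sum>j\<in>{k1+1..k1+m}. bb j)"
        unfolding B_def splitb by (simp add: algebra_simps)
      also have "\<dots> \<le> s * A + ((\<Sum>j\<in>{k1+1..k1+m}. a j) + Q)"
        using t bA s0 by (intro add_mono mult_left_mono) auto
      also have "\<dots> \<le> Aa + M" unfolding Aa_def splita M_def using a0 by linarith
      finally show ?thesis .
    qed
    have Bl: "B \<ge> real l * ln 2"
    proof -
      have "B \<ge> (\<Sum>j\<in>{k+1..k+l}. ln 2)" unfolding B_def bb_def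
      proof (rule sum_mono)
        fix j assume "j \<in> {k+1..k+l}"
        then have "j \<ge> 1" by simp
        then show "ln 2 \<le> - ln (c j)" using b_gt[of j] by linarith
      qed
      then show ?thesis by simp
    qed
    have l0: "real l * ln 2 > 0" using kl K0 by simp
    then have B0: "B > 0" using Bl by linarith
    have e1: "s - M / B = (s * B - M) / B" using B0 by (simp add: field_simps)
    have "s * B - M \<le> Aa" using sB by linarith
    then have "(s * B - M) / B \<le> Aa / B" using B0 by (intro divide_right_mono) auto
    then have "s - M / B \<le> Aa / B" using e1 by simp
    moreover have "M / B \<le> M / (real l * ln 2)" using M0 Bl l0 by (intro divide_left_mono) auto
    ultimately show ?thesis unfolding Aa_def B_def by linarith
  qed
  show ?thesis
  proof (rule ereal_le_epsilon2)
    fix e :: real assume e: "e > 0"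
    define L0 where "L0 = max K0 (nat \<lceil>M / (e * ln 2)\<rceil> + 1)"
    have ev: "eventually (\<lambda>l. ereal (s - e) \<le> (INF k\<in>{1..}. ereal (ln (real (\<Prod>j\<in>{k+1..k+l}. n j)) /
                                     - ln (\<Prod>j\<in>{k+1..k+l}. c j)))) sequentially"
      unfolding eventually_sequentially
    proof (intro exI[of _ L0] allI impI INF_greatest)
      fix l k assume l: "L0 \<le> l" and k: "k \<in> {1::nat..}"
      have lK: "l \<ge> K0" using l unfolding L0_def by simp
      have lM: "real l > M / (e * ln 2)" using l unfolding L0_def by linarith
      have "M / (real l * ln 2) \<le> e"
      proof -
        have "M < real l * (e * ln 2)" using lM e by (simp add: field_simps)
        then show ?thesis using lK K0 by (simp add: field_simps)
      qed
      then have "s - e \<le> (\<Sum>j\<in>{k+1..k+l}. a j) / (\<Sum>j\<in>{k+1..k+l}. bb j)"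
        using bound[of k l] k lK by auto
      then show "ereal (s - e) \<le> ereal (ln (real (\<Prod>j\<in>{k+1..k+l}. n j)) / - ln (\<Prod>j\<in>{k+1..k+l}. c j))"
        unfolding ln_N ln_P a_def bb_def by simp
    qed
    have "ereal (s - e) \<le> liminf (\<lambda>l. INF k\<in>{1..}. ereal (ln (real (\<Prod>j\<in>{k+1..k+l}. n j)) /
                                     - ln (\<Prod>j\<in>{k+1..k+l}. c j)))"
      by (rule Liminf_bounded[OF ev])
    then have "ereal (s - e) + ereal e \<le> liminf (\<lambda>l. INF k\<in>{1..}. ereal (ln (real (\<Prod>j\<in>{k+1..k+l}. n j)) /
                                     - ln (\<Prod>j\<in>{k+1..k+l}. c j))) + ereal e"
      by (rule add_right_mono)
    then show "ereal s \<le> liminf (\<lambda>l. INF k\<in>{1..}. ereal (ln (real (\<Prod>j\<in>{k+1..k+l}. n j)) /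
                                     - ln (\<Prod>j\<in>{k+1..k+l}. c j))) + ereal e" by simp
  qed
qed

end

theorem theorem2:
  fixes n :: "nat \<Rightarrow> nat" and c :: "nat \<Rightarrow> real" and I E :: "real set"
  assumes n_ge: "\<And>k. k \<ge> 1 \<Longrightarrow> n k \<ge> 2"
    and c_pos: "\<And>k. k \<ge> 1 \<Longrightarrow> c k > 0"
    and nc_lt: "\<And>k. k \<ge> 1 \<Longrightarrow> real (n k) * c k < 1"
    and I_int: "\<exists>a b. a \<le> b \<and> I = {a..b}"
    and E_in: "E \<in> moran_class I n c"
    and bdd: "bdd_above (n ` {1..})"
  shows "lower_dim E \<le>
    liminf (\<lambda>l. INF k\<in>{1..}. ereal (ln (real (\<Prod>j\<in>{k+1..k+l}. n j)) /
                                     - ln (\<Prod>j\<in>{k+1..k+l}. c j)))"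
proof -
  obtain J where J: "homog_moran_structure I n c J" and EJ: "E = moran_set n J"
    using E_in unfolding moran_class_def by blast
  interpret m: moran n c I J using J n_ge c_pos nc_lt by unfold_locales auto
  show ?thesis
    unfolding lower_dim_def
  proof (rule Sup_least)
    fix y assume "y \<in> ereal ` {s. s \<ge> 0 \<and> (\<exists>b>0. \<exists>C>0. \<forall>r R. 0 < r \<longrightarrow> r < R \<longrightarrow> R < b \<longrightarrow>
      (\<forall>x\<in>E. real (covering_number r (ball x R \<inter> E)) \<ge> C * (R / r) powr s))}"
    then obtain s b C where y: "y = ereal s" and s0: "s \<ge> 0" and b: "b > 0" and C: "C > 0"
      and H: "\<forall>r R. 0 < r \<longrightarrow> r < R \<longrightarrow> R < b \<longrightarrow>
      (\<forall>x\<in>E. real (covering_number r (ball x R \<inter> E)) \<ge> C * (R / r) powr s)"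
      by blast
    show "y \<le> liminf (\<lambda>l. INF k\<in>{1..}. ereal (ln (real (\<Prod>j\<in>{k+1..k+l}. n j)) /
                                     - ln (\<Prod>j\<in>{k+1..k+l}. c j)))"
      unfolding y by (rule m.key[OF s0 b C]) (use H EJ in simp)
  qed
qed

end
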